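(* Let $P(z)=\sum_{k=1}^K a_k(1-z)^k$, with $a_k\in\mathbb{C}$, be a polynomial mapping the unit disc $\mathbb{D}$ into $\overline{\mathbb{C}_0}=\{w:\operatorname{Re}w\ge0\}$. Then either $P\equiv0$ or $a_1>0$. *)

theory Defs
  imports "HOL-Analysis.Analysis"
begin

end

theory Submission
  imports Defs
begin

lemma key:
  fixes a :: "nat \<Rightarrow> complex" and K m :: nat and u :: complex
  assumes hyp: "\<And>z. z \<in> ball 0 1 \<Longrightarrow> Re (\<Sum>k=1..K. a k * (1 - z) ^ k) \<ge> 0"
    and m: "1 \<le> m" "m \<le> K" and z: "\<And>k. 1 \<le> k \<Longrightarrow> k < m \<Longrightarrow> a k = 0"
    and u: "Re u > 0"
  shows "Re (a m * u ^ m) \<ge> 0"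
proof -
  define g where "g t = (\<Sum>k=m..K. a k * (of_real t) ^ (k - m) * u ^ k)" for t :: real
  have "((\<lambda>t. Re (g t)) \<longlongrightarrow> Re (g 0)) (at_right 0)"
    unfolding g_def by (intro tendsto_intros)
  moreover have "g 0 = a m * u ^ m"
    unfolding g_def using m by (simp add: sum.atLeast_Suc_atMost sum.neutral)
  moreover have "\<forall>\<^sub>F t in at_right 0. Re (g t) \<ge> 0"
  proof -
    define x where "x = Re u"
    define y where "y = Im u"
    have d: "x / (x^2 + y^2) > 0" using u unfolding x_def
      by (simp add: add_pos_nonneg)
    have "\<forall>\<^sub>F t in at_right (0::real). 0 < t \<and> t < x / (x^2 + y^2)"
      using d eventually_at_right_less eventually_at_right_field by (auto simp: eventually_at_right_field)
    then show ?thesis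
    proof (rule eventually_mono)
      fix t :: real assume t: "0 < t \<and> t < x / (x^2 + y^2)"
      have xy: "x^2 + y^2 > 0" using u unfolding x_def by (simp add: add_pos_nonneg)
      have "t * (x^2 + y^2) < x" using t xy by (simp add: pos_less_divide_eq)
      hence lt: "(1 - t * x)^2 + (t * y)^2 < 1"
      proof -
        assume h: "t * (x^2 + y^2) < x"
        have "(1 - t * x)^2 + (t * y)^2 = 1 - t * (2*x - t * (x^2 + y^2))"
          by (simp add: power2_eq_square algebra_simps)
        moreover have "t * (2*x - t * (x^2 + y^2)) > 0" using h t u unfolding x_def by simp
        ultimately show ?thesis by simp
      qed
      have "norm (1 - of_real t * u) < 1"
      proof -
        have "(norm (1 - of_real t * u))^2 = (1 - t * x)^2 + (t * y)^2"
          by (simp add: cmod_power2 x_def y_def)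
        with lt have "(norm (1 - of_real t * u))^2 < 1^2" by simp
        thus ?thesis using power_less_imp_less_base by fastforce
      qed
      hence "1 - of_real t * u \<in> ball 0 1" by simp
      from hyp[OF this] have h1: "Re (\<Sum>k=1..K. a k * (of_real t * u) ^ k) \<ge> 0" by simp
      have h2: "(\<Sum>k=1..K. a k * (of_real t * u) ^ k) = of_real (t ^ m) * g t"
      proof -
        have split: "{1..K} = {1..<m} \<union> {m..K}" using m by auto
        have "(\<Sum>k=1..K. a k * (of_real t * u) ^ k) =
              (\<Sum>k\<in>{1..<m}. a k * (of_real t * u) ^ k) + (\<Sum>k=m..K. a k * (of_real t * u) ^ k)"
          unfolding split by (rule sum.union_disjoint) auto
        also have "(\<Sum>k\<in>{1..<m}. a k * (of_real t * u) ^ k) = 0"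
          using z by (intro sum.neutral) auto
        also have "(\<Sum>k=m..K. a k * (of_real t * u) ^ k) =
                   (\<Sum>k=m..K. of_real (t ^ m) * (a k * (of_real t) ^ (k - m) * u ^ k))"
        proof (rule sum.cong)
          fix k assume "k \<in> {m..K}"
          hence "k = m + (k - m)" by auto
          hence "(of_real t :: complex) ^ k = of_real t ^ m * of_real t ^ (k - m)"
            by (metis power_add)
          thus "a k * (of_real t * u) ^ k = of_real (t ^ m) * (a k * (of_real t) ^ (k - m) * u ^ k)"
            by (simp add: power_mult_distrib)
        qed simp
        finally show ?thesis unfolding g_def by (simp add: sum_distrib_left)
      qed
      have "Re (of_real (t ^ m) * g t) = t ^ m * Re (g t)" by simp
      hence "t ^ m * Re (g t) \<ge> 0" using h1 h2 by metis
      moreover have "t ^ m > 0" using t by simp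
      ultimately show "Re (g t) \<ge> 0" by (simp add: zero_le_mult_iff)
    qed
  qed
  ultimately show ?thesis
    by (metis tendsto_lowerbound trivial_limit_at_right_real)
qed

theorem lemma4p3:
  fixes a :: "nat \<Rightarrow> complex" and K :: nat
  assumes "\<And>z. z \<in> ball 0 1 \<Longrightarrow> Re (\<Sum>k=1..K. a k * (1 - z) ^ k) \<ge> 0"
  shows "(\<forall>z. (\<Sum>k=1..K. a k * (1 - z) ^ k) = 0) \<or> (a 1 \<in> \<real> \<and> Re (a 1) > 0)"
proof (cases "\<exists>k. 1 \<le> k \<and> k \<le> K \<and> a k \<noteq> 0")
  case False
  hence "\<forall>z. (\<Sum>k=1..K. a k * (1 - z) ^ k) = 0" by (auto intro!: sum.neutral)
  thus ?thesis by blast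
next
  case True
  define m where "m = (LEAST k. 1 \<le> k \<and> k \<le> K \<and> a k \<noteq> 0)"
  have mP: "1 \<le> m \<and> m \<le> K \<and> a m \<noteq> 0" unfolding m_def using True by (rule LeastI_ex)
  have z: "\<And>k. 1 \<le> k \<Longrightarrow> k < m \<Longrightarrow> a k = 0"
    using not_less_Least m_def mP by fastforce
  have K: "Re (a m * u ^ m) \<ge> 0" if "Re u > 0" for u
    by (rule key[where a=a and K=K]) (use assms mP z that in auto)
  show ?thesis
  proof (cases "m = 1")
    case True
    define x where "x = Re (a 1)"
    define y where "y = Im (a 1)"
    have h: "x - y * s \<ge> 0" for s
      using K[of "1 + \<i> * of_real s"] mP True by (simp add: x_def y_def)
    have y0: "y = 0"
    proof (rule ccontr)
      assume "y \<noteq> 0"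
      with h[of "(x + 1) / y"] show False by simp
    qed
    have "x \<ge> 0" using h[of 0] by simp
    moreover have "x \<noteq> 0" using mP True y0 by (simp add: x_def y_def complex_eq_iff)
    ultimately have "x > 0" by simp
    thus ?thesis using y0 by (simp add: x_def y_def complex_is_Real_iff)
  next
    case False
    hence m2: "m \<ge> 2" using mP by simp
    define b where "b = a m"
    have b0: "b \<noteq> 0" using mP b_def by simp
    define v where "v = (if Im b = 0 then - cnj b + \<i> else - cnj b)"
    have vnp: "v \<notin> \<real>\<^sub>\<le>\<^sub>0" using b0
      by (auto simp: v_def complex_nonpos_Reals_iff complex_eq_iff)
    hence v0: "v \<noteq> 0" by auto
    have neg: "Re (b * v) < 0"
    proof -
      have "Re b \<noteq> 0 \<or> Im b \<noteq> 0" using b0 by (simp add: complex_eq_iff)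
      hence "Re b ^ 2 + Im b ^ 2 > 0" by (simp add: sum_power2_gt_zero_iff)
      thus ?thesis by (auto simp: v_def power2_eq_square)
    qed
    define u where "u = exp (Ln v / of_nat m)"
    have uv: "u ^ m = v"
    proof -
      have "u ^ m = exp (of_nat m * (Ln v / of_nat m))" unfolding u_def by (rule exp_of_nat_mult[symmetric])
      also have "of_nat m * (Ln v / of_nat m) = Ln v" using m2 by simp
      finally show ?thesis using v0 by simp
    qed
    have im1: "Im (Ln v) < pi" using Im_Ln_less_pi[OF vnp] .
    have im2: "-pi < Im (Ln v)" using mpi_less_Im_Ln[OF v0] .
    have "Im (Ln v / of_nat m) = Im (Ln v) / real m" by (simp add: Im_divide_of_nat)
    moreover have rm: "real m \<ge> 2" using m2 by simp
    moreover have pm: "pi / 2 * 2 \<le> pi / 2 * real m"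
      using rm pi_gt_zero by (intro mult_left_mono) auto
    moreover have "Im (Ln v) / real m < pi / 2"
    proof -
      have "Im (Ln v) < pi / 2 * real m" using im1 pm by linarith
      thus ?thesis using rm by (simp add: divide_less_eq)
    qed
    moreover have "- (pi / 2) < Im (Ln v) / real m"
    proof -
      have "- (pi / 2) * real m < Im (Ln v)" using im2 pm by linarith
      thus ?thesis using rm by (simp add: less_divide_eq)
    qed
    ultimately have "cos (Im (Ln v / of_nat m)) > 0" by (simp add: cos_gt_zero_pi)
    hence "Re u > 0" unfolding u_def by (simp add: Re_exp)
    from K[OF this] have "Re (a m * u ^ m) \<ge> 0" by simp
    with neg uv b_def show ?thesis by simp
  qed
qed

end
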